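(* For any finite-dimensional complex Lie algebra $\mathfrak{h}$, $\mathcal{F}(\mathcal{C}^\bullet\mathfrak{h},\mathfrak{sl}_2)_{(0)}=\mathcal{F}^1(\mathcal{C}^\bullet\mathfrak{h},\mathfrak{sl}_2)_{(0)}$.
   Context: $\mathcal{C}^\bullet\mathfrak{h}=(\bigwedge^\bullet\mathfrak{h}^*,d)$ is the Chevalley–Eilenberg cochain cdga of $\mathfrak{h}$. For a cdga $A$ and finite-dimensional Lie algebra $\mathfrak{g}$, $\mathcal{F}(A,\mathfrak{g})=\{\omega\in A^1\otimes\mathfrak{g}: d\omega+\frac12[\omega,\omega]=0\}$ (for $\omega=\sum_k\eta_k\otimes g_k$: $\sum_k d\eta_k\otimes g_k+\sum_{k<l}\eta_k\eta_l\otimes[g_k,g_l]=0$), and $\mathcal{F}^1(A,\mathfrak{g})=\{\eta\otimes g:\eta\in A^1,\ d\eta=0,\ g\in\mathfrak{g}\}$. Equivalently, identifying $\mathfrak{h}^*\otimes\mathfrak{sl}_2=\mathrm{Hom}(\mathfrak{h},\mathfrak{sl}_2)$, $\mathcal{F}(\mathcal{C}^\bullet\mathfrak{h},\mathfrak{sl}_2)$ is the variety of Lie algebra homomorphisms $\mathfrak{h}\to\mathfrak{sl}_2$ and $\mathcal{F}^1$ the subset of those of rank at most $1$. $X_{(0)}$ denotes the analytic germ at $0$. *)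

theory Defs
  imports "HOL-Analysis.Analysis"
begin

text \<open>A finite-dimensional complex Lie algebra h of dimension n, given by its
structure constants c i j k w.r.t. a basis e_0..e_(n-1):
[e_i, e_j] = sum_k c i j k e_k.\<close>

definition is_lie_struct :: "nat \<Rightarrow> (nat \<Rightarrow> nat \<Rightarrow> nat \<Rightarrow> complex) \<Rightarrow> bool" where
  "is_lie_struct n c \<longleftrightarrow>
     (\<forall>i<n. \<forall>j<n. \<forall>k<n. c i j k = - c j i k) \<and>
     (\<forall>i<n. \<forall>j<n. \<forall>k<n. \<forall>m<n.
        (\<Sum>l<n. c i j l * c l k m + c j k l * c l i m + c k i l * c l j m) = 0)"

definition sl2 :: "(complex^2^2) set" where
  "sl2 = {A. trace A = 0}"

definition lie_br :: "complex^2^2 \<Rightarrow> complex^2^2 \<Rightarrow> complex^2^2" where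
  "lie_br A B = A ** B - B ** A"

definition msc :: "complex \<Rightarrow> complex^2^2 \<Rightarrow> complex^2^2" where
  "msc a A = (\<chi> p q. a * A$p$q)"

text \<open>An element of h^* \<otimes> sl_2 = Hom(h, sl_2), given by the images of the basis vectors.\<close>

definition hom_space :: "nat \<Rightarrow> (nat \<Rightarrow> complex^2^2) set" where
  "hom_space n = {\<phi>. (\<forall>i<n. \<phi> i \<in> sl2) \<and> (\<forall>i\<ge>n. \<phi> i = 0)}"

text \<open>F(C h, sl_2): Maurer-Cartan elements = Lie algebra homomorphisms h -> sl_2.\<close>

definition F_CE :: "nat \<Rightarrow> (nat \<Rightarrow> nat \<Rightarrow> nat \<Rightarrow> complex) \<Rightarrow> (nat \<Rightarrow> complex^2^2) set" where
  "F_CE n c = {\<phi> \<in> hom_space n.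
      \<forall>i<n. \<forall>j<n. lie_br (\<phi> i) (\<phi> j) = (\<Sum>k<n. msc (c i j k) (\<phi> k))}"

text \<open>F^1(C h, sl_2): elements eta \<otimes> g with eta a closed 1-cochain
(d eta = 0, i.e. eta vanishes on [h,h]) and g \<in> sl_2.\<close>

definition F1_CE :: "nat \<Rightarrow> (nat \<Rightarrow> nat \<Rightarrow> nat \<Rightarrow> complex) \<Rightarrow> (nat \<Rightarrow> complex^2^2) set" where
  "F1_CE n c = {\<phi> \<in> hom_space n. \<exists>(\<eta>::nat \<Rightarrow> complex) g. g \<in> sl2 \<and>
      (\<forall>i<n. \<forall>j<n. (\<Sum>k<n. c i j k * \<eta> k) = 0) \<and>
      (\<forall>i<n. \<phi> i = msc (\<eta> i) g)}"

definition germ_eq_at0 :: "nat \<Rightarrow> (nat \<Rightarrow> complex^2^2) set \<Rightarrow> (nat \<Rightarrow> complex^2^2) set \<Rightarrow> bool" where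
  "germ_eq_at0 n X Y \<longleftrightarrow> (\<exists>\<epsilon>>0. \<forall>\<phi>\<in>hom_space n. (\<forall>i<n. norm (\<phi> i) < \<epsilon>) \<longrightarrow> (\<phi> \<in> X \<longleftrightarrow> \<phi> \<in> Y))"

end

theory Submission
  imports Defs "Jordan_Normal_Form.Char_Poly"
begin


lemma eig_discrete:
  fixes B :: "nat \<Rightarrow> nat \<Rightarrow> complex" and n :: nat
  shows "\<exists>\<delta>>0. \<forall>s r. s \<noteq> 0 \<longrightarrow> cmod s < \<delta> \<longrightarrow>
     (\<forall>l<n. (\<Sum>m<n. r m * B m l) = s * r l) \<longrightarrow> (\<forall>l<n. r l = 0)"
proof -
  define A where "A = Matrix.mat n n (\<lambda>(i,j). B j i)"
  have A: "A \<in> carrier_mat n n" unfolding A_def by simp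
  define p where "p = char_poly A"
  have p0: "p \<noteq> 0" using degree_monic_char_poly[OF A] unfolding p_def by auto
  define R where "R = {s. poly p s = 0}"
  have fR: "finite R" unfolding R_def using poly_roots_finite[OF p0] .
  define \<delta> where "\<delta> = Min (insert 1 (cmod ` (R - {0})))"
  have dpos: "\<delta> > 0" unfolding \<delta>_def using fR by (subst Min_gr_iff) auto
  have key: "poly p s = 0" if r: "\<forall>l<n. (\<Sum>m<n. r m * B m l) = s * r l" and nz: "\<exists>l<n. r l \<noteq> 0" for s r
  proof -
    have "eigenvector A (Matrix.vec n r) s"
      unfolding eigenvector_def
    proof (intro conjI)
      show "Matrix.vec n r \<in> carrier_vec (dim_row A)" using A by auto
      show "Matrix.vec n r \<noteq> 0\<^sub>v (dim_row A)" using A nz by (auto simp: vec_eq_iff)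
      show "A *\<^sub>v Matrix.vec n r = s \<cdot>\<^sub>v Matrix.vec n r"
        using r by (auto simp: A_def mult_mat_vec_def scalar_prod_def vec_eq_iff atLeast0LessThan mult.commute[of "B _ _"])
    qed
    then have "eigenvalue A s" unfolding eigenvalue_def by blast
    then show ?thesis using eigenvalue_root_char_poly[OF A] p_def by simp
  qed
  show ?thesis
  proof (intro exI[of _ \<delta>] conjI dpos allI impI)
    fix s :: complex and r l assume s: "s \<noteq> 0" "cmod s < \<delta>"
      and r: "\<forall>l<n. (\<Sum>m<n. r m * B m l) = s * r l" and l: "l < n"
    show "r l = 0"
    proof (rule ccontr)
      assume "r l \<noteq> 0"
      then have "s \<in> R - {0}" using key[OF r] l s unfolding R_def by auto
      then have "\<delta> \<le> cmod s" unfolding \<delta>_def using fR by (intro Min_le) auto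
      then show False using s by simp
    qed
  qed
qed



no_notation Matrix.vec_index (infixl "$" 100)

definition mu :: "complex^2^2 \<Rightarrow> complex" where
  "mu A = A$1$1^2 + A$1$2 * A$2$1"

lemma m22_eq: "(A::complex^2^2) = B \<longleftrightarrow> A$1$1 = B$1$1 \<and> A$1$2 = B$1$2 \<and> A$2$1 = B$2$1 \<and> A$2$2 = B$2$2"
  by (auto simp: Finite_Cartesian_Product.vec_eq_iff forall_2)

lemma lie_ent: "lie_br A B $ p $ q = (\<Sum>k\<in>UNIV. A$p$k * B$k$q) - (\<Sum>k\<in>UNIV. B$p$k * A$k$q)"
  by (simp add: lie_br_def matrix_matrix_mult_def)

lemma msc_ent[simp]: "msc a A $ p $ q = a * A$p$q"
  by (simp add: msc_def)

lemma sum_ent[simp]: "(sum f S) $ p $ q = (\<Sum>k\<in>S. f k $ p $ q)"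
  by (simp add: sum_component)

lemma sl2_iff: "A \<in> sl2 \<longleftrightarrow> A$2$2 = - A$1$1"
  by (auto simp: sl2_def Determinants.trace_def sum_2 eq_neg_iff_add_eq_0 add.commute)

lemma ad3: assumes "A \<in> sl2"
  shows "lie_br A (lie_br A (lie_br A B)) = msc (4 * mu A) (lie_br A B)"
  using assms unfolding m22_eq sl2_iff
  apply (simp add: lie_ent sum_2 mu_def)
  apply (intro conjI)
  apply (simp_all add: algebra_simps power2_eq_square)
  done

lemma polar_aux: "(a::complex)^2 + b*c = 0 \<Longrightarrow> x^2 + y*z = 0 \<Longrightarrow> (a+x)^2 + (b+y)*(c+z) = 0 \<Longrightarrow> 2*a*x + b*z + c*y = 0"
proof -
  assume h: "(a::complex)^2 + b*c = 0" "x^2 + y*z = 0" "(a+x)^2 + (b+y)*(c+z) = 0"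
  have "(a+x)^2 + (b+y)*(c+z) = (a^2+b*c) + (x^2+y*z) + (2*a*x + b*z + c*y)"
    by (simp add: algebra_simps power2_eq_square)
  then show ?thesis using h by simp
qed

lemma iso_aux: fixes a b c x y z :: complex
  assumes h1: "a^2 + b*c = 0" and h2: "x^2 + y*z = 0" and h3: "2*a*x + b*z + c*y = 0"
  shows "a*y = b*x \<and> c*x = a*z \<and> b*z = c*y"
proof -
  have "(a*y - b*x)^2 = (a^2 + b*c)*y^2 + b^2*(x^2+y*z) - b*y*(2*a*x + b*z + c*y)"
    by (simp add: algebra_simps power2_eq_square)
  then have e1: "(a*y - b*x)^2 = 0" using h1 h2 h3 by simp
  have "(c*x - a*z)^2 = c^2*(x^2+y*z) + (a^2 + b*c)*z^2 - c*z*(2*a*x + b*z + c*y)"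
    by (simp add: algebra_simps power2_eq_square)
  then have e2: "(c*x - a*z)^2 = 0" using h1 h2 h3 by simp
  have "(b*z - c*y)^2 = (2*a*x + b*z + c*y) * (b*z + c*y - 2*a*x) + 4*x^2*(a^2 + b*c) - 4*b*c*(x^2+y*z)"
    by (simp add: algebra_simps power2_eq_square)
  then have e3: "(b*z - c*y)^2 = 0" using h1 h2 h3 by simp
  from e1 e2 e3 show ?thesis by simp
qed

lemma lie_rel: fixes a b c x y z :: complex
  assumes "b*z - c*y = 0" "2*(a*y - b*x) = 0" "2*(c*x - a*z) = 0"
  shows "a*y = b*x \<and> c*x = a*z \<and> b*z = c*y"
  using assms by simp

lemma lie_entries: assumes "A \<in> sl2" "B \<in> sl2"
  shows "lie_br A B $ 1 $ 1 = A$1$2 * B$2$1 - A$2$1 * B$1$2"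
    "lie_br A B $ 1 $ 2 = 2 * (A$1$1 * B$1$2 - A$1$2 * B$1$1)"
    "lie_br A B $ 2 $ 1 = 2 * (A$2$1 * B$1$1 - A$1$1 * B$2$1)"
    "lie_br A B $ 2 $ 2 = - (A$1$2 * B$2$1 - A$2$1 * B$1$2)"
  using assms unfolding sl2_iff by (simp_all add: lie_ent sum_2 algebra_simps)

lemma iso: assumes "A \<in> sl2" "B \<in> sl2" "mu A = 0" "mu B = 0" "mu (A + B) = 0"
  shows "lie_br A B = 0"
proof -
  let ?a = "A$1$1" and ?b = "A$1$2" and ?c = "A$2$1" and ?x = "B$1$1" and ?y = "B$1$2" and ?z = "B$2$1"
  have h1: "?a^2 + ?b * ?c = 0" using assms(3) by (simp add: mu_def)
  have h2: "?x^2 + ?y * ?z = 0" using assms(4) by (simp add: mu_def)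
  have h3: "2 * ?a * ?x + ?b * ?z + ?c * ?y = 0"
    using assms(3-5) polar_aux[of ?a ?b ?c ?x ?y ?z] by (simp add: mu_def)
  have r: "?a*?y = ?b*?x \<and> ?c*?x = ?a*?z \<and> ?b*?z = ?c*?y" by (rule iso_aux[OF h1 h2 h3])
  show ?thesis unfolding m22_eq using r lie_entries[OF assms(1,2)] by simp
qed

lemma cent: assumes "A \<in> sl2" "B \<in> sl2" "A \<noteq> 0" "lie_br A B = 0"
  shows "\<exists>t. B = msc t A"
proof -
  let ?a = "A$1$1" and ?b = "A$1$2" and ?c = "A$2$1" and ?x = "B$1$1" and ?y = "B$1$2" and ?z = "B$2$1"
  have "lie_br A B $ 1 $ 1 = 0" "lie_br A B $ 1 $ 2 = 0" "lie_br A B $ 2 $ 1 = 0"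
    using assms(4) by simp_all
  then have "?b*?z - ?c*?y = 0" "2*(?a*?y - ?b*?x) = 0" "2*(?c*?x - ?a*?z) = 0"
    unfolding lie_entries[OF assms(1,2)] by simp_all
  then have r: "?a*?y = ?b*?x" "?c*?x = ?a*?z" "?b*?z = ?c*?y"
    using lie_rel[of ?a ?b ?c ?x ?y ?z] by simp_all
  have nz: "?a \<noteq> 0 \<or> ?b \<noteq> 0 \<or> ?c \<noteq> 0" using assms(1,3) unfolding m22_eq sl2_iff by auto
  show ?thesis
  proof (cases "?a \<noteq> 0")
    case True
    show ?thesis using r True assms(1,2) unfolding m22_eq sl2_iff
      by (intro exI[of _ "?x / ?a"]) (simp add: field_simps)
  next
    case F: False
    show ?thesis
    proof (cases "?b \<noteq> 0")
      case True
      show ?thesis using r True F assms(1,2) unfolding m22_eq sl2_iff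
        by (intro exI[of _ "?y / ?b"]) (simp add: field_simps)
    next
      case False
      with F nz have "?c \<noteq> 0" by simp
      then show ?thesis using r False F assms(1,2) unfolding m22_eq sl2_iff
        by (intro exI[of _ "?z / ?c"]) (simp add: field_simps)
    qed
  qed
qed



lemma lie_sum: "lie_br A (\<Sum>k\<in>S. msc (f k) (g k)) = (\<Sum>k\<in>S. msc (f k) (lie_br A (g k)))"
  by (simp add: Finite_Cartesian_Product.vec_eq_iff lie_ent sum_2 sum_distrib_left sum_distrib_right sum.distrib sum_subtractf
      right_diff_distrib algebra_simps)

lemma lie_add_left: "lie_br (A + B) C = lie_br A C + lie_br B C"
  by (simp add: Finite_Cartesian_Product.vec_eq_iff lie_ent sum_2 algebra_simps)

lemma lie_antisym: "lie_br B A = - lie_br A B"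
  by (simp add: lie_br_def)

lemma lie_self: "lie_br A A = 0"
  by (simp add: lie_br_def)

lemma msc_add_left: "msc (a + b) X = msc a X + msc b X"
  by (simp add: Finite_Cartesian_Product.vec_eq_iff algebra_simps)

lemma msc_msc: "msc a (msc b X) = msc (a * b) X"
  by (simp add: Finite_Cartesian_Product.vec_eq_iff)

lemma sum_msc: "(\<Sum>k\<in>S. msc (f k) X) = msc (\<Sum>k\<in>S. f k) X"
  by (simp add: Finite_Cartesian_Product.vec_eq_iff sum_distrib_right)

lemma msc_eq0: "msc a X = 0 \<longleftrightarrow> a = 0 \<or> X = 0"
  by (auto simp: Finite_Cartesian_Product.vec_eq_iff)

lemma msc_zero[simp]: "msc a 0 = 0" "msc 0 X = 0"
  by (auto simp: Finite_Cartesian_Product.vec_eq_iff)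

lemma lie_msc_msc: "lie_br (msc a g) (msc b g) = 0"
  by (simp add: Finite_Cartesian_Product.vec_eq_iff lie_ent algebra_simps sum_distrib_left)

lemma mu_double: "mu (A + A) = 4 * mu A"
  by (simp add: mu_def algebra_simps power2_eq_square)

lemma mu_polar: assumes "mu A = 0" "mu B = 0" "mu (A+B) = 0" shows True by simp

lemma ent_le_norm: "cmod ((A::complex^2^2) $ p $ q) \<le> norm A"
proof -
  have "norm (A$p$q) \<le> norm (A$p)" using Finite_Cartesian_Product.norm_nth_le by blast
  also have "\<dots> \<le> norm A" using Finite_Cartesian_Product.norm_nth_le by blast
  finally show ?thesis by simp
qed

lemma mu_bound: assumes "\<And>p q. cmod ((A::complex^2^2) $ p $ q) \<le> e"
  shows "cmod (mu A) \<le> 2 * e^2"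
proof -
  have e0: "0 \<le> e" using assms[of 1 1] norm_ge_zero order_trans by blast
  have "cmod (mu A) \<le> cmod (A$1$1)^2 + cmod (A$1$2) * cmod (A$2$1)"
    unfolding mu_def by (metis norm_mult norm_power norm_triangle_ineq)
  also have "\<dots> \<le> e^2 + e * e"
    by (intro add_mono power_mono mult_mono assms e0) auto
  finally show ?thesis by (simp add: power2_eq_square)
qed

lemma sl2_add: "A \<in> sl2 \<Longrightarrow> B \<in> sl2 \<Longrightarrow> A + B \<in> sl2"
  by (simp add: sl2_iff)



lemma msc_sum_right: "msc a (\<Sum>k\<in>S. msc (f k) (g k)) = (\<Sum>k\<in>S. msc (a * f k) (g k))"
  by (simp add: Finite_Cartesian_Product.vec_eq_iff sum_distrib_left mult.assoc)

theorem corollary4p6: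
  fixes n :: nat and c :: "nat \<Rightarrow> nat \<Rightarrow> nat \<Rightarrow> complex"
  assumes "is_lie_struct n c"
  shows "germ_eq_at0 n (F_CE n c) (F1_CE n c)"
proof -
  define S where "S = {..<n} \<times> {..<n}"
  define Mm where "Mm = (\<lambda>i j k l. c i l k + c j l k)"
  define M2 where "M2 = (\<lambda>i j m l. (\<Sum>k<n. Mm i j m k * Mm i j k l))"
  define P where "P = (\<lambda>pr \<delta>. \<delta> > 0 \<and> (\<forall>s r. s \<noteq> 0 \<longrightarrow> cmod s < \<delta> \<longrightarrow>
     (\<forall>l<n. (\<Sum>m<n. r m * M2 (fst pr) (snd pr) m l) = s * r l) \<longrightarrow> (\<forall>l<n. r l = 0)))"
  have "\<forall>pr\<in>S. \<exists>\<delta>. P pr \<delta>"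
    unfolding P_def by (intro ballI eig_discrete)
  then obtain d where dP: "\<forall>pr\<in>S. P pr (d pr)" by (rule bchoice[elim_format]) blast
  have d: "d pr > 0 \<and> (\<forall>s r. s \<noteq> 0 \<longrightarrow> cmod s < d pr \<longrightarrow>
     (\<forall>l<n. (\<Sum>m<n. r m * M2 (fst pr) (snd pr) m l) = s * r l) \<longrightarrow> (\<forall>l<n. r l = 0))"
    if "pr \<in> S" for pr using dP that unfolding P_def by blast
  have fS: "finite S" unfolding S_def by simp
  define \<delta> where "\<delta> = Min (insert 1 (d ` S))"
  have dpos: "\<delta> > 0" unfolding \<delta>_def using fS d by (subst Min_gr_iff) auto
  have dle1: "\<delta> \<le> 1" unfolding \<delta>_def using fS by (intro Min_le) auto
  have dle: "\<delta> \<le> d pr" if "pr \<in> S" for pr unfolding \<delta>_def using fS that by (intro Min_le) auto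
  define \<epsilon> where "\<epsilon> = \<delta> / 64"
  have epos: "\<epsilon> > 0" unfolding \<epsilon>_def using dpos by simp
  show ?thesis unfolding germ_eq_at0_def
  proof (intro exI[of _ \<epsilon>] conjI epos ballI impI)
    fix \<phi> assume hs: "\<phi> \<in> hom_space n" and small: "\<forall>i<n. norm (\<phi> i) < \<epsilon>"
    have sl: "\<And>i. i < n \<Longrightarrow> \<phi> i \<in> sl2" using hs by (simp add: hom_space_def)
    have ent: "cmod (\<phi> i $ p $ q) \<le> \<epsilon>" if "i < n" for i p q
      using ent_le_norm[of "\<phi> i" p q] small that by fastforce
    show "\<phi> \<in> F_CE n c \<longleftrightarrow> \<phi> \<in> F1_CE n c"
    proof
      assume F: "\<phi> \<in> F_CE n c"
      then have H: "\<And>i j. i < n \<Longrightarrow> j < n \<Longrightarrow> lie_br (\<phi> i) (\<phi> j) = (\<Sum>k<n. msc (c i j k) (\<phi> k))"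
        by (simp add: F_CE_def)
      have K: "mu (\<phi> i + \<phi> j) \<noteq> 0 \<longrightarrow> (\<forall>l<n. lie_br (\<phi> i + \<phi> j) (\<phi> l) = 0)"
        if ij: "i < n" "j < n" for i j
      proof (rule impI)
        assume mu0: "mu (\<phi> i + \<phi> j) \<noteq> 0"
        define A where "A = \<phi> i + \<phi> j"
        have Asl: "A \<in> sl2" unfolding A_def using sl ij by (simp add: sl2_add)
        have T1: "lie_br A (\<phi> l) = (\<Sum>k<n. msc (Mm i j k l) (\<phi> k))" if "l < n" for l
          unfolding A_def lie_add_left H[OF ij(1) that] H[OF ij(2) that] Mm_def msc_add_left
          by (simp add: sum.distrib)
        have T2: "lie_br A (lie_br A (\<phi> l)) = (\<Sum>m<n. msc (M2 i j m l) (\<phi> m))" if "l < n" for l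
        proof -
          have "lie_br A (lie_br A (\<phi> l)) = (\<Sum>k<n. msc (Mm i j k l) (lie_br A (\<phi> k)))"
            unfolding T1[OF that] lie_sum ..
          also have "\<dots> = (\<Sum>k<n. msc (Mm i j k l) (\<Sum>m<n. msc (Mm i j m k) (\<phi> m)))"
            using T1 by simp
          also have "\<dots> = (\<Sum>k<n. \<Sum>m<n. msc (Mm i j k l * Mm i j m k) (\<phi> m))"
            by (simp add: msc_sum_right)
          also have "\<dots> = (\<Sum>m<n. \<Sum>k<n. msc (Mm i j k l * Mm i j m k) (\<phi> m))"
            by (rule sum.swap)
          also have "\<dots> = (\<Sum>m<n. msc (M2 i j m l) (\<phi> m))"
            unfolding sum_msc M2_def by (simp add: mult.commute)
          finally show ?thesis .
        qed
        define s where "s = 4 * mu A"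
        have s0: "s \<noteq> 0" using mu0 unfolding s_def A_def by simp
        have sb: "cmod s < d (i, j)"
        proof -
          have "cmod (mu A) \<le> 2 * (2*\<epsilon>)^2"
          proof (rule mu_bound)
            fix p q
            have "cmod (A $ p $ q) \<le> cmod (\<phi> i $ p $ q) + cmod (\<phi> j $ p $ q)"
              unfolding A_def by (simp add: norm_triangle_ineq)
            then show "cmod (A $ p $ q) \<le> 2 * \<epsilon>" using ent[OF ij(1)] ent[OF ij(2)] by (smt (verit))
          qed
          then have "cmod s \<le> 32 * \<epsilon>^2" unfolding s_def by (simp add: norm_mult power2_eq_square)
          also have "\<dots> = \<delta> * (\<delta> / 128)" unfolding \<epsilon>_def by (simp add: power2_eq_square)
          also have "\<dots> < \<delta>" using dpos dle1 by simp
          also have "\<dots> \<le> d (i,j)" using dle ij S_def by simp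
          finally show ?thesis .
        qed
        have "lie_br A (\<phi> l) $ p $ q = 0" if l: "l < n" for l p q
        proof -
          define r where "r = (\<lambda>a. lie_br A (\<phi> a) $ p $ q)"
          have ev: "\<forall>l<n. (\<Sum>m<n. r m * M2 i j m l) = s * r l"
          proof (intro allI impI)
            fix l assume l: "l < n"
            have "lie_br A (lie_br A (lie_br A (\<phi> l))) = msc s (lie_br A (\<phi> l))"
              unfolding s_def using ad3[OF Asl] .
            moreover have "lie_br A (lie_br A (lie_br A (\<phi> l))) = (\<Sum>m<n. msc (M2 i j m l) (lie_br A (\<phi> m)))"
              unfolding T2[OF l] lie_sum ..
            ultimately have "(\<Sum>m<n. msc (M2 i j m l) (lie_br A (\<phi> m))) $ p $ q = msc s (lie_br A (\<phi> l)) $ p $ q"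
              by simp
            then show "(\<Sum>m<n. r m * M2 i j m l) = s * r l" by (simp add: r_def mult.commute)
          qed
          have "(i,j) \<in> S" using ij S_def by simp
          then have dd: "\<forall>s r. s \<noteq> 0 \<longrightarrow> cmod s < d (i,j) \<longrightarrow>
             (\<forall>l<n. (\<Sum>m<n. r m * M2 i j m l) = s * r l) \<longrightarrow> (\<forall>l<n. r l = 0)"
            using d by simp
          show ?thesis using dd[rule_format, OF s0 sb ev[rule_format] l] unfolding r_def .
        qed
        then show "\<forall>l<n. lie_br (\<phi> i + \<phi> j) (\<phi> l) = 0" unfolding A_def by (simp add: Finite_Cartesian_Product.vec_eq_iff)
      qed
      have comm: "lie_br (\<phi> i) (\<phi> j) = 0" if ij: "i < n" "j < n" for i j
      proof -
        have two: "X + X = 0 \<Longrightarrow> X = (0::complex^2^2)" for X by (simp add: Finite_Cartesian_Product.vec_eq_iff)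
        show ?thesis
        proof (cases "mu (\<phi> i + \<phi> i) \<noteq> 0")
          case True
          then have "lie_br (\<phi> i + \<phi> i) (\<phi> j) = 0" using K[OF ij(1) ij(1)] ij by auto
          then show ?thesis using two[of "lie_br (\<phi> i) (\<phi> j)"] lie_add_left[of "\<phi> i" "\<phi> i" "\<phi> j"] by argo
        next
          case F1: False
          show ?thesis
          proof (cases "mu (\<phi> j + \<phi> j) \<noteq> 0")
            case True
            then have "lie_br (\<phi> j + \<phi> j) (\<phi> i) = 0" using K[OF ij(2) ij(2)] ij by auto
            then have "lie_br (\<phi> j) (\<phi> i) = 0" using two[of "lie_br (\<phi> j) (\<phi> i)"] lie_add_left[of "\<phi> j" "\<phi> j" "\<phi> i"] by argo
            then show ?thesis using lie_antisym[of "\<phi> i" "\<phi> j"] by simp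
          next
            case F2: False
            show ?thesis
            proof (cases "mu (\<phi> i + \<phi> j) \<noteq> 0")
              case True
              then have "lie_br (\<phi> i + \<phi> j) (\<phi> j) = 0" using K[OF ij] ij by auto
              then show ?thesis by (simp add: lie_add_left lie_self)
            next
              case False
              have "mu (\<phi> i) = 0" using F1 mu_double[of "\<phi> i"] by simp
              moreover have "mu (\<phi> j) = 0" using F2 mu_double[of "\<phi> j"] by simp
              ultimately show ?thesis using False iso[OF sl[OF ij(1)] sl[OF ij(2)]] by simp
            qed
          qed
        qed
      qed
      show "\<phi> \<in> F1_CE n c"
      proof (cases "\<forall>i<n. \<phi> i = 0")
        case True
        then show ?thesis using hs unfolding F1_CE_def
          by (auto intro!: exI[of _ "\<lambda>_. 0"] exI[of _ 0] simp: sl2_iff)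
      next
        case False
        then obtain p where p: "p < n" "\<phi> p \<noteq> 0" by auto
        define g where "g = \<phi> p"
        have g0: "g \<noteq> 0" and gsl: "g \<in> sl2" using p sl unfolding g_def by auto
        have "\<forall>i\<in>{..<n}. \<exists>t. \<phi> i = msc t g"
        proof
          fix i assume "i \<in> {..<n}"
          then have i: "i < n" by simp
          have "lie_br g (\<phi> i) = 0" unfolding g_def using comm[OF p(1) i] .
          then show "\<exists>t. \<phi> i = msc t g" by (rule cent[OF gsl sl[OF i] g0])
        qed
        then obtain \<eta> where eta0: "\<forall>i\<in>{..<n}. \<phi> i = msc (\<eta> i) g"
          by (rule bchoice[elim_format]) blast
        then have eta: "\<And>i. i < n \<Longrightarrow> \<phi> i = msc (\<eta> i) g" by blast
        have cl: "(\<Sum>k<n. c i j k * \<eta> k) = 0" if ij: "i < n" "j < n" for i j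
        proof -
          have "0 = (\<Sum>k<n. msc (c i j k) (\<phi> k))" using comm[OF ij] H[OF ij] by simp
          also have "\<dots> = (\<Sum>k<n. msc (c i j k * \<eta> k) g)"
            using eta by (simp add: msc_msc)
          also have "\<dots> = msc (\<Sum>k<n. c i j k * \<eta> k) g" by (rule sum_msc)
          finally show ?thesis using g0 by (simp add: msc_eq0)
        qed
        have "\<phi> \<in> hom_space n \<and> (g \<in> sl2 \<and> (\<forall>i<n. \<forall>j<n. (\<Sum>k<n. c i j k * \<eta> k) = 0) \<and>
             (\<forall>i<n. \<phi> i = msc (\<eta> i) g))"
          using hs gsl cl eta by blast
        then show ?thesis unfolding F1_CE_def by blast
      qed
    next
      assume F1: "\<phi> \<in> F1_CE n c"
      then obtain \<eta> g where g: "g \<in> sl2" and cl: "\<forall>i<n. \<forall>j<n. (\<Sum>k<n. c i j k * \<eta> k) = 0"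
        and eta: "\<forall>i<n. \<phi> i = msc (\<eta> i) g" unfolding F1_CE_def by blast
      have "lie_br (\<phi> i) (\<phi> j) = (\<Sum>k<n. msc (c i j k) (\<phi> k))" if ij: "i < n" "j < n" for i j
      proof -
        have "(\<Sum>k<n. msc (c i j k) (\<phi> k)) = (\<Sum>k<n. msc (c i j k * \<eta> k) g)"
          using eta by (simp add: msc_msc)
        also have "\<dots> = msc (\<Sum>k<n. c i j k * \<eta> k) g" by (rule sum_msc)
        also have "\<dots> = 0" using cl ij by simp
        finally show ?thesis using eta ij lie_msc_msc by simp
      qed
      then show "\<phi> \<in> F_CE n c" unfolding F_CE_def using hs by blast
    qed
  qed
qed

end
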